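(* Let $\mathcal{R}$ be a commutative ring with unity, $P$ a locally finite poset in which every maximal chain has at least three elements, and $b$ an additive biderivation of $I(P,\mathcal{R})$. For $x\in P$: (1) if $x$ is a minimal element of $P$, then $b(e_{xx},e_{xx})=\sum_{x<y,\ y\text{ maximal in }P}b_{xy}(e_{xx},e_{xx})\,e_{xy}$; (2) if $x$ is a maximal element of $P$, then $b(e_{xx},e_{xx})=\sum_{y<x,\ y\text{ minimal in }P}b_{yx}(e_{xx},e_{xx})\,e_{yx}$; (3) if $x$ is neither minimal nor maximal, then $b(e_{xx},e_{xx})=0$.
   Context: $I(P,\mathcal{R})$ is the incidence algebra: functions $f:P\times P\to\mathcal{R}$ with $f(x,y)=0$ unless $x\le y$, with product $(fg)(x,y)=\sum_{x\le z\le y}f(x,z)g(z,y)$; $e_{xy}$ ($x\le y$) is the function equal to $1$ at $(x,y)$ and $0$ elsewhere. An additive biderivation is a map $b$ of two arguments, additive in each, with $b(\alpha\beta,\gamma)=\alpha b(\beta,\gamma)+b(\alpha,\gamma)\beta$ and $b(\alpha,\beta\gamma)=\beta b(\alpha,\gamma)+b(\alpha,\beta)\gamma$. Write $b_{pq}(\alpha,\beta)=b(\alpha,\beta)(p,q)$. A maximal chain is a totally ordered subset to which no element of $P$ can be added keeping it totally ordered. $x$ is minimal (maximal) if no $y$ satisfies $y<x$ ($x<y$). *)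

theory Defs
  imports Main
begin

text \<open>Posets are modelled as types of class order (the whole type is P).
Elements of the incidence algebra I(P,R) are functions P \<Rightarrow> P \<Rightarrow> R.\<close>

definition locally_finite :: "'a::order itself \<Rightarrow> bool" where
  "locally_finite _ \<longleftrightarrow> (\<forall>x y::'a. finite {x..y})"

definition is_chain :: "'a::order set \<Rightarrow> bool" where
  "is_chain C \<longleftrightarrow> (\<forall>x\<in>C. \<forall>y\<in>C. x \<le> y \<or> y \<le> x)"

definition maximal_chain :: "'a::order set \<Rightarrow> bool" where
  "maximal_chain C \<longleftrightarrow> is_chain C \<and> (\<forall>z. is_chain (insert z C) \<longrightarrow> z \<in> C)"

definition has_at_least_three :: "'a set \<Rightarrow> bool" where
  "has_at_least_three C \<longleftrightarrow> (\<exists>a b c. a \<in> C \<and> b \<in> C \<and> c \<in> C \<and> a \<noteq> b \<and> a \<noteq> c \<and> b \<noteq> c)"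

definition minimal_elem :: "'a::order \<Rightarrow> bool" where
  "minimal_elem x \<longleftrightarrow> \<not> (\<exists>y. y < x)"

definition maximal_elem :: "'a::order \<Rightarrow> bool" where
  "maximal_elem x \<longleftrightarrow> \<not> (\<exists>y. x < y)"

definition incidence_algebra :: "('a::order \<Rightarrow> 'a \<Rightarrow> 'r::comm_ring_1) set" where
  "incidence_algebra = {f. \<forall>x y. \<not> x \<le> y \<longrightarrow> f x y = 0}"

definition inc_add :: "('a \<Rightarrow> 'a \<Rightarrow> 'r::comm_ring_1) \<Rightarrow> ('a \<Rightarrow> 'a \<Rightarrow> 'r) \<Rightarrow> ('a \<Rightarrow> 'a \<Rightarrow> 'r)" where
  "inc_add f g = (\<lambda>x y. f x y + g x y)"

definition inc_mult :: "('a::order \<Rightarrow> 'a \<Rightarrow> 'r::comm_ring_1) \<Rightarrow> ('a \<Rightarrow> 'a \<Rightarrow> 'r) \<Rightarrow> ('a \<Rightarrow> 'a \<Rightarrow> 'r)" where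
  "inc_mult f g = (\<lambda>x y. \<Sum>z\<in>{x..y}. f x z * g z y)"

definition e_unit :: "'a \<Rightarrow> 'a \<Rightarrow> ('a \<Rightarrow> 'a \<Rightarrow> 'r::comm_ring_1)" where
  "e_unit a b = (\<lambda>x y. if x = a \<and> y = b then 1 else 0)"

definition additive_biderivation ::
  "(('a::order \<Rightarrow> 'a \<Rightarrow> 'r::comm_ring_1) \<Rightarrow> ('a \<Rightarrow> 'a \<Rightarrow> 'r) \<Rightarrow> ('a \<Rightarrow> 'a \<Rightarrow> 'r)) \<Rightarrow> bool" where
  "additive_biderivation b \<longleftrightarrow>
     (\<forall>\<alpha>\<in>incidence_algebra. \<forall>\<beta>\<in>incidence_algebra. b \<alpha> \<beta> \<in> incidence_algebra) \<and>
     (\<forall>\<alpha>\<in>incidence_algebra. \<forall>\<beta>\<in>incidence_algebra. \<forall>\<gamma>\<in>incidence_algebra.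
        b (inc_add \<alpha> \<beta>) \<gamma> = inc_add (b \<alpha> \<gamma>) (b \<beta> \<gamma>) \<and>
        b \<alpha> (inc_add \<beta> \<gamma>) = inc_add (b \<alpha> \<beta>) (b \<alpha> \<gamma>) \<and>
        b (inc_mult \<alpha> \<beta>) \<gamma> = inc_add (inc_mult \<alpha> (b \<beta> \<gamma>)) (inc_mult (b \<alpha> \<gamma>) \<beta>) \<and>
        b \<alpha> (inc_mult \<beta> \<gamma>) = inc_add (inc_mult \<beta> (b \<alpha> \<gamma>)) (inc_mult (b \<alpha> \<beta>) \<gamma>))"

end

theory Submission imports Defs begin

lemma fin_iv: "locally_finite TYPE('a::order) \<Longrightarrow> finite {a..b::'a}"
  by (simp add: locally_finite_def)

lemma assoc:
  fixes f g h :: "'a::order \<Rightarrow> 'a \<Rightarrow> 'r::comm_ring_1"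
  assumes lf: "locally_finite TYPE('a)"
  shows "inc_mult (inc_mult f g) h = inc_mult f (inc_mult g h)"
proof (intro ext)
  fix x y :: 'a
  have fin: "\<And>a b::'a. finite {a..b}" using fin_iv[OF lf] .
  define F where "F w z = f x w * g w z * h z y" for w z
  have "inc_mult (inc_mult f g) h x y = (\<Sum>z\<in>{x..y}. \<Sum>w\<in>{x..z}. F w z)"
    by (simp add: inc_mult_def F_def sum_distrib_right)
  also have "\<dots> = (\<Sum>z\<in>{x..y}. \<Sum>w\<in>{x..y}. if w \<le> z then F w z else 0)"
  proof (rule sum.cong[OF refl])
    fix z assume "z \<in> {x..y}"
    then have E: "{x..z} = {w\<in>{x..y}. w \<le> z}" by (auto intro: order_trans)
    then show "(\<Sum>w\<in>{x..z}. F w z) = (\<Sum>w\<in>{x..y}. if w \<le> z then F w z else 0)"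
      unfolding E by (metis (no_types) sum.inter_filter fin)
  qed
  also have "\<dots> = (\<Sum>w\<in>{x..y}. \<Sum>z\<in>{x..y}. if w \<le> z then F w z else 0)"
    by (rule sum.swap)
  also have "\<dots> = (\<Sum>w\<in>{x..y}. \<Sum>z\<in>{w..y}. F w z)"
  proof (rule sum.cong[OF refl])
    fix w assume "w \<in> {x..y}"
    then have E: "{w..y} = {z\<in>{x..y}. w \<le> z}" by (auto intro: order_trans)
    then show "(\<Sum>z\<in>{x..y}. if w \<le> z then F w z else 0) = (\<Sum>z\<in>{w..y}. F w z)"
      unfolding E by (metis (no_types) sum.inter_filter fin)
  qed
  also have "\<dots> = inc_mult f (inc_mult g h) x y"
    by (simp add: inc_mult_def F_def sum_distrib_left mult.assoc)
  finally show "inc_mult (inc_mult f g) h x y = inc_mult f (inc_mult g h) x y" .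
qed

lemma distl: "inc_mult f (inc_add g h) = inc_add (inc_mult f g) (inc_mult f h)"
  by (simp add: inc_mult_def inc_add_def distrib_left sum.distrib)
lemma distr: "inc_mult (inc_add g h) f = inc_add (inc_mult g f) (inc_mult h f)"
  by (simp add: inc_mult_def inc_add_def distrib_right sum.distrib)

lemma mult_I[simp]: "inc_mult f g \<in> incidence_algebra"
  by (simp add: incidence_algebra_def inc_mult_def)

lemma e_I[simp]: "a \<le> a' \<Longrightarrow> e_unit a a' \<in> incidence_algebra"
  by (auto simp: incidence_algebra_def e_unit_def)

lemma b_I: "additive_biderivation b \<Longrightarrow> \<alpha> \<in> incidence_algebra \<Longrightarrow> \<beta> \<in> incidence_algebra \<Longrightarrow> b \<alpha> \<beta> \<in> incidence_algebra"
  by (simp add: additive_biderivation_def)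

lemma if01_mult[simp]: "(if P then 1 else 0) * (c::'r::comm_ring_1) = (if P then c else 0)"
  "(c::'r::comm_ring_1) * (if P then 1 else 0) = (if P then c else 0)" by simp_all

lemma mult_e_left:
  fixes f :: "'a::order \<Rightarrow> 'a \<Rightarrow> 'r::comm_ring_1"
  assumes lf: "locally_finite TYPE('a)" and "a \<le> a'" and fI: "f \<in> incidence_algebra"
  shows "inc_mult (e_unit a a') f = (\<lambda>p q. if p = a then f a' q else 0)"
proof (intro ext)
  fix p q :: 'a
  have "inc_mult (e_unit a a') f p q = (if p = a then (\<Sum>z\<in>{p..q}. if z = a' then f z q else 0) else 0)"
    by (simp add: inc_mult_def e_unit_def cong: if_cong)
  also have "\<dots> = (if p = a then f a' q else 0)"
    using fin_iv[OF lf, of p q] assms fI by (auto simp: incidence_algebra_def)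
  finally show "inc_mult (e_unit a a') f p q = (if p = a then f a' q else 0)" .
qed

lemma mult_e_right:
  fixes f :: "'a::order \<Rightarrow> 'a \<Rightarrow> 'r::comm_ring_1"
  assumes lf: "locally_finite TYPE('a)" and "a \<le> a'" and fI: "f \<in> incidence_algebra"
  shows "inc_mult f (e_unit a a') = (\<lambda>p q. if q = a' then f p a else 0)"
proof (intro ext)
  fix p q :: 'a
  have "inc_mult f (e_unit a a') p q = (if q = a' then (\<Sum>z\<in>{p..q}. if z = a then f p z else 0) else 0)"
    by (simp add: inc_mult_def e_unit_def cong: if_cong)
  also have "\<dots> = (if q = a' then f p a else 0)"
    using fin_iv[OF lf, of p q] assms fI by (auto simp: incidence_algebra_def)
  finally show "inc_mult f (e_unit a a') p q = (if q = a' then f p a else 0)" .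
qed

lemma add_I[simp]: "f \<in> incidence_algebra \<Longrightarrow> g \<in> incidence_algebra \<Longrightarrow> inc_add f g \<in> incidence_algebra"
  by (simp add: incidence_algebra_def inc_add_def)

lemma bd_m1: "additive_biderivation b \<Longrightarrow> \<alpha> \<in> incidence_algebra \<Longrightarrow> \<beta> \<in> incidence_algebra \<Longrightarrow> \<gamma> \<in> incidence_algebra \<Longrightarrow>
  b (inc_mult \<alpha> \<beta>) \<gamma> = inc_add (inc_mult \<alpha> (b \<beta> \<gamma>)) (inc_mult (b \<alpha> \<gamma>) \<beta>)"
  unfolding additive_biderivation_def by blast
lemma bd_m2: "additive_biderivation b \<Longrightarrow> \<alpha> \<in> incidence_algebra \<Longrightarrow> \<beta> \<in> incidence_algebra \<Longrightarrow> \<gamma> \<in> incidence_algebra \<Longrightarrow>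
  b \<alpha> (inc_mult \<beta> \<gamma>) = inc_add (inc_mult \<beta> (b \<alpha> \<gamma>)) (inc_mult (b \<alpha> \<beta>) \<gamma>)"
  unfolding additive_biderivation_def by blast
lemma bd_a2: "additive_biderivation b \<Longrightarrow> \<alpha> \<in> incidence_algebra \<Longrightarrow> \<beta> \<in> incidence_algebra \<Longrightarrow> \<gamma> \<in> incidence_algebra \<Longrightarrow>
  b \<alpha> (inc_add \<beta> \<gamma>) = inc_add (b \<alpha> \<beta>) (b \<alpha> \<gamma>)"
  unfolding additive_biderivation_def by blast

lemma bresar:
  fixes b :: "('a::order \<Rightarrow> 'a \<Rightarrow> 'r::comm_ring_1) \<Rightarrow> ('a \<Rightarrow> 'a \<Rightarrow> 'r) \<Rightarrow> ('a \<Rightarrow> 'a \<Rightarrow> 'r)"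
  assumes lf: "locally_finite TYPE('a)" and bd: "additive_biderivation b"
    and I: "\<alpha> \<in> incidence_algebra" "\<beta> \<in> incidence_algebra" "\<gamma> \<in> incidence_algebra" "\<delta> \<in> incidence_algebra"
  shows "inc_mult \<alpha> (inc_mult \<beta> (b \<gamma> \<delta>)) p q + inc_mult (b \<alpha> \<beta>) (inc_mult \<delta> \<gamma>) p q
       = inc_mult \<beta> (inc_mult \<alpha> (b \<gamma> \<delta>)) p q + inc_mult (b \<alpha> \<beta>) (inc_mult \<gamma> \<delta>) p q"
proof -
  
  have m1: "b (inc_mult \<alpha> \<gamma>) (inc_mult \<beta> \<delta>) = inc_add (inc_mult \<alpha> (b \<gamma> (inc_mult \<beta> \<delta>))) (inc_mult (b \<alpha> (inc_mult \<beta> \<delta>)) \<gamma>)"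
    by (rule bd_m1[OF bd]) (use I in simp_all)
  have m2: "b \<gamma> (inc_mult \<beta> \<delta>) = inc_add (inc_mult \<beta> (b \<gamma> \<delta>)) (inc_mult (b \<gamma> \<beta>) \<delta>)"
    by (rule bd_m2[OF bd]) (use I in simp_all)
  have m3: "b \<alpha> (inc_mult \<beta> \<delta>) = inc_add (inc_mult \<beta> (b \<alpha> \<delta>)) (inc_mult (b \<alpha> \<beta>) \<delta>)"
    by (rule bd_m2[OF bd]) (use I in simp_all)
  have n1: "b (inc_mult \<alpha> \<gamma>) (inc_mult \<beta> \<delta>) = inc_add (inc_mult \<beta> (b (inc_mult \<alpha> \<gamma>) \<delta>)) (inc_mult (b (inc_mult \<alpha> \<gamma>) \<beta>) \<delta>)"
    by (rule bd_m2[OF bd]) (use I in simp_all)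
  have n2: "b (inc_mult \<alpha> \<gamma>) \<delta> = inc_add (inc_mult \<alpha> (b \<gamma> \<delta>)) (inc_mult (b \<alpha> \<delta>) \<gamma>)"
    by (rule bd_m1[OF bd]) (use I in simp_all)
  have n3: "b (inc_mult \<alpha> \<gamma>) \<beta> = inc_add (inc_mult \<alpha> (b \<gamma> \<beta>)) (inc_mult (b \<alpha> \<beta>) \<gamma>)"
    by (rule bd_m1[OF bd]) (use I in simp_all)
  have "inc_add (inc_mult \<alpha> (inc_add (inc_mult \<beta> (b \<gamma> \<delta>)) (inc_mult (b \<gamma> \<beta>) \<delta>)))
          (inc_mult (inc_add (inc_mult \<beta> (b \<alpha> \<delta>)) (inc_mult (b \<alpha> \<beta>) \<delta>)) \<gamma>)
      = inc_add (inc_mult \<beta> (inc_add (inc_mult \<alpha> (b \<gamma> \<delta>)) (inc_mult (b \<alpha> \<delta>) \<gamma>)))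
          (inc_mult (inc_add (inc_mult \<alpha> (b \<gamma> \<beta>)) (inc_mult (b \<alpha> \<beta>) \<gamma>)) \<delta>)"
    using trans[OF m1[unfolded m2 m3, symmetric] n1[unfolded n2 n3]] .
  then have "inc_add (inc_add (inc_mult \<alpha> (inc_mult \<beta> (b \<gamma> \<delta>))) (inc_mult \<alpha> (inc_mult (b \<gamma> \<beta>) \<delta>)))
          (inc_add (inc_mult \<beta> (inc_mult (b \<alpha> \<delta>) \<gamma>)) (inc_mult (b \<alpha> \<beta>) (inc_mult \<delta> \<gamma>)))
      = inc_add (inc_add (inc_mult \<beta> (inc_mult \<alpha> (b \<gamma> \<delta>))) (inc_mult \<beta> (inc_mult (b \<alpha> \<delta>) \<gamma>)))
          (inc_add (inc_mult \<alpha> (inc_mult (b \<gamma> \<beta>) \<delta>)) (inc_mult (b \<alpha> \<beta>) (inc_mult \<gamma> \<delta>)))"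
    by (simp only: distl distr assoc[OF lf])
  then have "\<And>p q. inc_add (inc_add (inc_mult \<alpha> (inc_mult \<beta> (b \<gamma> \<delta>))) (inc_mult \<alpha> (inc_mult (b \<gamma> \<beta>) \<delta>)))
          (inc_add (inc_mult \<beta> (inc_mult (b \<alpha> \<delta>) \<gamma>)) (inc_mult (b \<alpha> \<beta>) (inc_mult \<delta> \<gamma>))) p q
      = inc_add (inc_add (inc_mult \<beta> (inc_mult \<alpha> (b \<gamma> \<delta>))) (inc_mult \<beta> (inc_mult (b \<alpha> \<delta>) \<gamma>)))
          (inc_add (inc_mult \<alpha> (inc_mult (b \<gamma> \<beta>) \<delta>)) (inc_mult (b \<alpha> \<beta>) (inc_mult \<gamma> \<delta>))) p q"
    by simp
  then show ?thesis by (simp add: inc_add_def algebra_simps)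
qed


lemma e_unit_app: "e_unit a b p q = (if p = a \<and> q = b then 1 else 0)"
  by (simp add: e_unit_def)

lemma mult_ee:
  assumes lf: "locally_finite TYPE('a::order)" and "a \<le> a'" "c \<le> (c'::'a)"
  shows "inc_mult (e_unit a a') (e_unit c c') = (if a' = c then e_unit a c' else (\<lambda>_ _. (0::'r::comm_ring_1)))"
  unfolding mult_e_left[OF lf \<open>a \<le> a'\<close> e_I[OF \<open>c \<le> c'\<close>]] by (auto simp: e_unit_def fun_eq_iff)

lemma mult_zero_r[simp]: "inc_mult f (\<lambda>_ _. 0) = (\<lambda>_ _. 0)"
  by (simp add: inc_mult_def)
lemma mult_zero_l[simp]: "inc_mult (\<lambda>_ _. 0) f = (\<lambda>_ _. 0)"
  by (simp add: inc_mult_def)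

lemma b_zero:
  fixes b :: "('a::order \<Rightarrow> 'a \<Rightarrow> 'r::comm_ring_1) \<Rightarrow> ('a \<Rightarrow> 'a \<Rightarrow> 'r) \<Rightarrow> ('a \<Rightarrow> 'a \<Rightarrow> 'r)"
  assumes bd: "additive_biderivation b" and aI: "\<alpha> \<in> incidence_algebra"
  shows "b \<alpha> (\<lambda>_ _. 0) = (\<lambda>_ _. 0)"
proof -
  have z: "(\<lambda>_ _. 0) \<in> incidence_algebra" by (simp add: incidence_algebra_def)
  have h: "inc_add (\<lambda>_ _. 0) (\<lambda>_ _. 0) = (\<lambda>(_::'a) (_::'a). (0::'r))" by (simp add: inc_add_def)
  have "b \<alpha> (\<lambda>_ _. 0) = inc_add (b \<alpha> (\<lambda>_ _. 0)) (b \<alpha> (\<lambda>_ _. 0))"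
    using bd_a2[OF bd aI z z] unfolding h .
  then show ?thesis by (auto simp: inc_add_def fun_eq_iff)
qed

lemma mult_e_left':
  fixes f :: "'a::order \<Rightarrow> 'a \<Rightarrow> 'r::comm_ring_1"
  assumes lf: "locally_finite TYPE('a)" and "a \<le> a'"
  shows "inc_mult (e_unit a a') f = (\<lambda>p q. if p = a \<and> a' \<le> q then f a' q else 0)"
proof (intro ext)
  fix p q :: 'a
  have "inc_mult (e_unit a a') f p q = (if p = a then (\<Sum>z\<in>{p..q}. if z = a' then f z q else 0) else 0)"
    by (simp add: inc_mult_def e_unit_def cong: if_cong)
  also have "\<dots> = (if p = a \<and> a' \<le> q then f a' q else 0)"
    using fin_iv[OF lf, of p q] assms by auto
  finally show "inc_mult (e_unit a a') f p q = (if p = a \<and> a' \<le> q then f a' q else 0)" .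
qed

lemma mult_e_right':
  fixes f :: "'a::order \<Rightarrow> 'a \<Rightarrow> 'r::comm_ring_1"
  assumes lf: "locally_finite TYPE('a)" and "a \<le> a'"
  shows "inc_mult f (e_unit a a') = (\<lambda>p q. if q = a' \<and> p \<le> a then f p a else 0)"
proof (intro ext)
  fix p q :: 'a
  have "inc_mult f (e_unit a a') p q = (if q = a' then (\<Sum>z\<in>{p..q}. if z = a then f p z else 0) else 0)"
    by (simp add: inc_mult_def e_unit_def cong: if_cong)
  also have "\<dots> = (if q = a' \<and> p \<le> a then f p a else 0)"
    using fin_iv[OF lf, of p q] assms by auto
  finally show "inc_mult f (e_unit a a') p q = (if q = a' \<and> p \<le> a then f p a else 0)" .
qed

theorem mainTheorem11:
  fixes b :: "('a::order \<Rightarrow> 'a \<Rightarrow> 'r::comm_ring_1) \<Rightarrow> ('a \<Rightarrow> 'a \<Rightarrow> 'r) \<Rightarrow> ('a \<Rightarrow> 'a \<Rightarrow> 'r)"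
    and x :: 'a
  assumes "locally_finite TYPE('a)"
    and "\<forall>C::'a set. maximal_chain C \<longrightarrow> has_at_least_three C"
    and "additive_biderivation b"
  shows "(minimal_elem x \<longrightarrow>
            b (e_unit x x) (e_unit x x) =
              (\<lambda>p q. if p = x \<and> x < q \<and> maximal_elem q
                      then b (e_unit x x) (e_unit x x) x q else 0))
       \<and> (maximal_elem x \<longrightarrow>
            b (e_unit x x) (e_unit x x) =
              (\<lambda>p q. if q = x \<and> p < x \<and> minimal_elem p
                      then b (e_unit x x) (e_unit x x) p x else 0))
       \<and> (\<not> minimal_elem x \<and> \<not> maximal_elem x \<longrightarrow>
            b (e_unit x x) (e_unit x x) = (\<lambda>p q. 0))"
proof -
  note lf = assms(1) and bd = assms(3)
  define B where "B = b (e_unit x x) (e_unit x x)"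
  have eI: "e_unit x x \<in> incidence_algebra" by simp
  have BI: "B \<in> incidence_algebra" unfolding B_def by (rule b_I[OF bd eI eI])
  note ss = mult_e_left'[OF lf] mult_e_right'[OF lf] b_I[OF bd]
  note me = mult_ee[OF lf]
  have ee: "inc_mult (e_unit x x) (e_unit x x) = (e_unit x x :: 'a \<Rightarrow> 'a \<Rightarrow> 'r)" by (simp add: me)
  have S0: "B = inc_add (inc_mult (e_unit x x) B) (inc_mult B (e_unit x x))"
    using bd_m1[OF bd eI eI eI] unfolding ee B_def .
  have S: "B p q = (if p = x \<and> x \<le> q then B x q else 0) + (if q = x \<and> p \<le> x then B p x else 0)" for p q
    using fun_cong[OF fun_cong[OF S0, of p], of q] BI by (simp add: inc_add_def ss)
  have Bxx: "B x x = 0" using S[of x x] by simp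
  have Boff: "p \<noteq> x \<Longrightarrow> q \<noteq> x \<Longrightarrow> B p q = 0" for p q using S[of p q] by auto
  have BnI: "\<not> p \<le> q \<Longrightarrow> B p q = 0" for p q using BI by (simp add: incidence_algebra_def)
  have A: "B x q = 0" if "x < q" "q < r" for q r
  proof -
    have n: "q \<noteq> r" "r \<noteq> q" "x \<noteq> q" using that by auto
    have "inc_mult (e_unit q r) (e_unit q q) = (\<lambda>_ _. 0::'r)"
         "inc_mult (e_unit q q) (e_unit q r) = (e_unit q r::'a \<Rightarrow> 'a \<Rightarrow> 'r)"
      using that n by (simp_all add: me less_imp_le)
    note pr = this
    show ?thesis
      using bresar[OF lf bd eI eI, of "e_unit q q" "e_unit q r" x r] that n BI
      unfolding pr by (simp add: ss B_def[symmetric] less_imp_le)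
  qed
  have Bm: "B p x = 0" if "s < p" "p < x" for s p
  proof -
    have n: "s \<noteq> p" "p \<noteq> x" "s \<noteq> x" using that by auto
    show ?thesis
      using bresar[OF lf bd, of "e_unit s p" "e_unit p p" "e_unit x x" "e_unit x x" s x] that n BI
      unfolding ee by (simp add: ss B_def[symmetric] less_imp_le)
  qed
  have C: "B x q = 0" if "s < x" "x < q" for s q
  proof -
    have n: "s \<noteq> x" "x \<noteq> q" "q \<noteq> x" using that by auto
    define f :: "'a \<Rightarrow> 'a \<Rightarrow> 'r" where "f = e_unit q q"
    have fI: "f \<in> incidence_algebra" by (simp add: f_def)
    have ef: "inc_mult (e_unit x x) f = (\<lambda>_ _. 0)" "inc_mult f (e_unit x x) = (\<lambda>_ _. 0)"
      using n by (simp_all add: f_def me)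
    have Z: "(\<lambda>_ _. 0) = inc_add (inc_mult (e_unit x x) (b (e_unit x x) f)) (inc_mult B f)"
      using bd_m2[OF bd eI eI fI] unfolding ef b_zero[OF bd eI] B_def .
    have 1: "0 = b (e_unit x x) f x q + B x q"
      using fun_cong[OF fun_cong[OF Z, of x], of q] that BI fI
      by (simp add: inc_add_def f_def ss less_imp_le)
    have 2: "b (e_unit x x) f x q = 0"
      using bresar[OF lf bd, of "e_unit s x" "e_unit x x" "e_unit x x" f s q] that n fI
      unfolding ef by (simp add: ss less_imp_le)
    show ?thesis using 1 2 by simp
  qed
  have D: "B p x = 0" if "p < x" "x < r" for p r
  proof -
    have n: "p \<noteq> x" "x \<noteq> r" "r \<noteq> x" "x \<noteq> p" using that by auto
    define f :: "'a \<Rightarrow> 'a \<Rightarrow> 'r" where "f = e_unit p p"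
    have fI: "f \<in> incidence_algebra" by (simp add: f_def)
    have fe: "inc_mult f (e_unit x x) = (\<lambda>_ _. 0)" "inc_mult (e_unit x x) f = (\<lambda>_ _. 0)"
      using n by (simp_all add: f_def me)
    have rr: "inc_mult (e_unit r r) (e_unit x r) = (\<lambda>_ _. 0::'r)"
         "inc_mult (e_unit x r) (e_unit r r) = (e_unit x r::'a \<Rightarrow> 'a \<Rightarrow> 'r)"
      using that n by (simp_all add: me less_imp_le)
    have Z: "(\<lambda>_ _. 0) = inc_add (inc_mult f B) (inc_mult (b (e_unit x x) f) (e_unit x x))"
      using bd_m2[OF bd eI fI eI] unfolding fe b_zero[OF bd eI] B_def .
    have 1: "0 = B p x + b (e_unit x x) f p x"
      using fun_cong[OF fun_cong[OF Z, of p], of x] that BI fI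
      by (simp add: inc_add_def f_def ss less_imp_le)
    have 2: "b (e_unit x x) f p x = 0"
      using bresar[OF lf bd, of "e_unit x x" f "e_unit x r" "e_unit r r" p r] that n fI
      unfolding fe rr by (simp add: ss less_imp_le f_def)
    show ?thesis using 1 2 by simp
  qed
  have main: "(minimal_elem x \<longrightarrow> B = (\<lambda>p q. if p = x \<and> x < q \<and> maximal_elem q then B x q else 0))
       \<and> (maximal_elem x \<longrightarrow> B = (\<lambda>p q. if q = x \<and> p < x \<and> minimal_elem p then B p x else 0))
       \<and> (\<not> minimal_elem x \<and> \<not> maximal_elem x \<longrightarrow> B = (\<lambda>p q. 0))"
  proof (intro conjI impI)
    assume mn: "minimal_elem x"
    show "B = (\<lambda>p q. if p = x \<and> x < q \<and> maximal_elem q then B x q else 0)"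
    proof (intro ext)
      fix p q
      show "B p q = (if p = x \<and> x < q \<and> maximal_elem q then B x q else 0)"
        using mn Bxx Boff[of p q] BnI[of p q] A[of q] unfolding minimal_elem_def maximal_elem_def
        by (cases "p = x"; cases "q = x") (auto simp: order.order_iff_strict)
    qed
  next
    assume mx: "maximal_elem x"
    show "B = (\<lambda>p q. if q = x \<and> p < x \<and> minimal_elem p then B p x else 0)"
    proof (intro ext)
      fix p q
      show "B p q = (if q = x \<and> p < x \<and> minimal_elem p then B p x else 0)"
        using mx Bxx Boff[of p q] BnI[of p q] Bm[of _ p] unfolding minimal_elem_def maximal_elem_def
        by (cases "p = x"; cases "q = x") (auto simp: order.order_iff_strict)
    qed
  next
    assume nn: "\<not> minimal_elem x \<and> \<not> maximal_elem x"
    then obtain s r where sr: "s < x" "x < r" unfolding minimal_elem_def maximal_elem_def by blast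
    show "B = (\<lambda>p q. 0)"
    proof (intro ext)
      fix p q
      show "B p q = 0"
        using Bxx Boff[of p q] BnI[of p q] C[OF sr(1), of q] D[of p, OF _ sr(2)]
        by (cases "p = x"; cases "q = x") (auto simp: order.order_iff_strict)
    qed
  qed
  then show ?thesis unfolding B_def .
qed

end
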